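(* Consider the randomized procedure $\mathfrak{h}_2$ described in the context, run on $D=\{\mathbf{v}_1,\dots,\mathbf{v}_q\}$ with parameters $\varepsilon,\eta$ and $T=d^2$ iterations, producing $P_{\mathrm{avg}}=\frac1T\sum_{t=1}^T P_t$. Then $\mathbb{E}\left[\max_{i\in[d]}\left|\frac1q w(D,i)-\sqrt{\tfrac{2}{d}}\,\frac1q\, w(P_{\mathrm{avg}},i)\right|\right]\le 2\sqrt{\frac{2\log(2/\eta)}{d^2}}+11\sqrt2\,\frac{\log d}{q\varepsilon\sqrt d}+\frac4d+2d\exp(-q/4)+\eta,$ where the expectation is over all randomness of the procedure (quantization, coordinate sampling and Laplace noise).
   Context: Let $d\ge1$, $\eta>0$ with $2/\eta$ an integer, $S=\{-1,-1+\eta,\dots,1-\eta,1\}$. Let $D=\{\mathbf{v}_1,\dots,\mathbf{v}_q\}\subset\mathbb{R}^{d}$ with all coordinates $v_{ji}\in[-\sqrt{2/d},\sqrt{2/d}]$, and let $w(D,i)=\sum_{j=1}^q v_{ji}$. Quantization: for $x\in[-1,1]$ let $k=\lfloor (x+1)/\eta\rfloor$ and let $Q(x)=-1+k\eta$ with probability $\frac{(k+1)\eta-1-x}{\eta}$ and $Q(x)=-1+(k+1)\eta$ with probability $\frac{x+1-k\eta}{\eta}$, independently across applications; $Q$ acts coordinatewise. Let $D_Q=\{\tilde v_j=Q(\sqrt{d/2}\,\mathbf{v}_j)\}_{j=1}^q$ and $w(D_Q,i)=\sum_j\tilde v_{ji}$. For a distribution $P$ on $S^{d}$ with $i$-th marginal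 $P_i$, $w(P,i)=q\sum_{s\in S}sP_i(s)$. Let $P_0$ be uniform on $S^{d}$. For $t=1,\dots,T$: sample $i(t)\in[d]$ with probability proportional to $\exp(\varepsilon|w(P_{t-1},i)-w(D_Q,i)|)$; set $\mu_{i(t)}=w(D_Q,i(t))+\mathrm{Lap}(1/\varepsilon)$; set $P_t(\mathbf{s})\propto P_{t-1}(\mathbf{s})\exp\big(s_{i(t)}(\mu_{i(t)}-w(P_{t-1},i(t)))/(2q)\big)$. Finally $P_{\mathrm{avg}}=\frac1T\sum_{t=1}^TP_t$ and the output of $\mathfrak{h}_2$ is $\sqrt{2/d}\,\frac1q(w(P_{\mathrm{avg}},1),\dots,w(P_{\mathrm{avg}},d))$. *)

theory Defs
  imports "HOL-Probability.Probability"
begin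

(* Grid S = {-1, -1+eta, ..., 1} (assuming 2/eta is a natural number). *)
definition grid :: "real \<Rightarrow> real set" where
  "grid \<eta> = (\<lambda>k::nat. -1 + real k * \<eta>) ` {0..nat \<lfloor>2 / \<eta>\<rfloor>}"

definition gridD :: "nat \<Rightarrow> real \<Rightarrow> (nat \<Rightarrow> real) set" where
  "gridD d \<eta> = PiE {..<d} (\<lambda>_. grid \<eta>)"

(* Distributions on S^d are represented by their probability mass functions. *)
type_synonym distr = "(nat \<Rightarrow> real) \<Rightarrow> real"

definition marginal :: "nat \<Rightarrow> real \<Rightarrow> distr \<Rightarrow> nat \<Rightarrow> real \<Rightarrow> real" where
  "marginal d \<eta> P i s = (\<Sum>x\<in>{x\<in>gridD d \<eta>. x i = s}. P x)"

definition wP :: "nat \<Rightarrow> nat \<Rightarrow> real \<Rightarrow> distr \<Rightarrow> nat \<Rightarrow> real" where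
  "wP d q \<eta> P i = real q * (\<Sum>s\<in>grid \<eta>. s * marginal d \<eta> P i s)"

definition wD :: "nat \<Rightarrow> (nat \<Rightarrow> nat \<Rightarrow> real) \<Rightarrow> nat \<Rightarrow> real" where
  "wD q v i = (\<Sum>j<q. v j i)"

definition wDQ :: "nat \<Rightarrow> (nat \<times> nat \<Rightarrow> real) \<Rightarrow> nat \<Rightarrow> real" where
  "wDQ q DQ i = (\<Sum>j<q. DQ (j, i))"

definition quant :: "real \<Rightarrow> real \<Rightarrow> real pmf" where
  "quant \<eta> x = (let k = real_of_int \<lfloor>(x + 1) / \<eta>\<rfloor> in
     map_pmf (\<lambda>b. if b then -1 + (k + 1) * \<eta> else -1 + k * \<eta>)
       (bernoulli_pmf ((x + 1 - k * \<eta>) / \<eta>)))"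

definition quant_data :: "nat \<Rightarrow> nat \<Rightarrow> real \<Rightarrow> (nat \<Rightarrow> nat \<Rightarrow> real) \<Rightarrow> (nat \<times> nat \<Rightarrow> real) pmf" where
  "quant_data d q \<eta> v = Pi_pmf ({..<q} \<times> {..<d}) 0
     (\<lambda>(j, i). quant \<eta> (sqrt (real d / 2) * v j i))"

definition laplace :: "real \<Rightarrow> real measure" where
  "laplace \<epsilon> = density lborel (\<lambda>x. ennreal (\<epsilon> / 2 * exp (- \<epsilon> * \<bar>x\<bar>)))"

definition P0 :: "nat \<Rightarrow> real \<Rightarrow> distr" where
  "P0 d \<eta> = (\<lambda>s. if s \<in> gridD d \<eta> then 1 / real (card (gridD d \<eta>)) else 0)"

definition em_prob :: "nat \<Rightarrow> nat \<Rightarrow> real \<Rightarrow> real \<Rightarrow> (nat \<times> nat \<Rightarrow> real) \<Rightarrow> distr \<Rightarrow> nat \<Rightarrow> real" where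
  "em_prob d q \<eta> \<epsilon> DQ P i =
     exp (\<epsilon> * \<bar>wP d q \<eta> P i - wDQ q DQ i\<bar>) /
     (\<Sum>k<d. exp (\<epsilon> * \<bar>wP d q \<eta> P k - wDQ q DQ k\<bar>))"

definition upd :: "nat \<Rightarrow> nat \<Rightarrow> real \<Rightarrow> distr \<Rightarrow> nat \<Rightarrow> real \<Rightarrow> distr" where
  "upd d q \<eta> P i \<mu> =
     (let f = (\<lambda>s. P s * exp (s i * (\<mu> - wP d q \<eta> P i) / (2 * real q)))
      in (\<lambda>s. f s / (\<Sum>x\<in>gridD d \<eta>. f x)))"

(* Expected value of F(sum_{t} P_t) for the remaining n iterations, given the
   quantized data DQ, the current distribution P and the running sum Ps of
   previously produced P_t. *)
primrec h2_exp :: "nat \<Rightarrow> nat \<Rightarrow> real \<Rightarrow> real \<Rightarrow> (nat \<times> nat \<Rightarrow> real) \<Rightarrow> (distr \<Rightarrow> real)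
    \<Rightarrow> nat \<Rightarrow> distr \<Rightarrow> distr \<Rightarrow> real" where
  "h2_exp d q \<eta> \<epsilon> DQ F 0 P Ps = F Ps"
| "h2_exp d q \<eta> \<epsilon> DQ F (Suc n) P Ps =
     (\<Sum>i<d. em_prob d q \<eta> \<epsilon> DQ P i *
        (\<integral>z. (let P' = upd d q \<eta> P i (wDQ q DQ i + z)
               in h2_exp d q \<eta> \<epsilon> DQ F n P' (\<lambda>s. Ps s + P' s)) \<partial>laplace \<epsilon>))"

definition err :: "nat \<Rightarrow> nat \<Rightarrow> real \<Rightarrow> (nat \<Rightarrow> nat \<Rightarrow> real) \<Rightarrow> distr \<Rightarrow> real" where
  "err d q \<eta> v Pavg = Max ((\<lambda>i. \<bar>wD q v i / real q - sqrt (2 / real d) * (1 / real q) * wP d q \<eta> Pavg i\<bar>) ` {..<d})"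

definition h2_expected_error :: "nat \<Rightarrow> nat \<Rightarrow> real \<Rightarrow> real \<Rightarrow> nat \<Rightarrow> (nat \<Rightarrow> nat \<Rightarrow> real) \<Rightarrow> real" where
  "h2_expected_error d q \<eta> \<epsilon> T v =
     measure_pmf.expectation (quant_data d q \<eta> v)
       (\<lambda>DQ. h2_exp d q \<eta> \<epsilon> DQ (\<lambda>Ps. err d q \<eta> v (\<lambda>s. Ps s / real T)) T (P0 d \<eta>) (\<lambda>_. 0))"

end

theory Submission
  imports Defs
begin


lemma grid_eq:
  assumes "\<eta> > 0" "2 / \<eta> = real N"
  shows "grid \<eta> = (\<lambda>k::nat. -1 + real k * \<eta>) ` {0..N}"
  using assms unfolding grid_def by simp

lemma grid_finite: "finite (grid \<eta>)"
  unfolding grid_def by simp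

lemma grid_bound:
  assumes "\<eta> > 0" "2 / \<eta> = real N" "s \<in> grid \<eta>"
  shows "-1 \<le> s \<and> s \<le> 1"
proof -
  obtain k where k: "k \<le> N" "s = -1 + real k * \<eta>"
    using assms grid_eq by auto
  have "real k * \<eta> \<le> real N * \<eta>" using k assms by (intro mult_right_mono) auto
  also have "real N * \<eta> = 2" using assms by (simp add: field_simps)
  finally show ?thesis using k assms by auto
qed

lemma grid_card:
  assumes "\<eta> > 0" "2 / \<eta> = real N"
  shows "card (grid \<eta>) = N + 1"
proof -
  have "inj_on (\<lambda>k::nat. -1 + real k * \<eta>) {0..N}"
    using assms by (auto simp: inj_on_def)
  then show ?thesis using grid_eq[OF assms] by (simp add: card_image)
qed

lemma gridD_finite: "finite (gridD d \<eta>)"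
  unfolding gridD_def by (intro finite_PiE) (auto simp: grid_finite)

lemma gridD_card:
  assumes "\<eta> > 0" "2 / \<eta> = real N"
  shows "card (gridD d \<eta>) = (N + 1) ^ d"
  unfolding gridD_def using grid_card[OF assms] by (simp add: card_PiE)

lemma gridD_coord: "x \<in> gridD d \<eta> \<Longrightarrow> i < d \<Longrightarrow> x i \<in> grid \<eta>"
  unfolding gridD_def by auto

lemma gridD_nonempty:
  assumes "\<eta> > 0" "2 / \<eta> = real N"
  shows "gridD d \<eta> \<noteq> {}"
  using gridD_card[OF assms, of d] by auto

lemma quant_support:
  assumes "\<eta> > 0" "2 / \<eta> = real N" "-1 \<le> x" "x \<le> 1" "y \<in> set_pmf (quant \<eta> x)"
  shows "y \<in> grid \<eta> \<and> \<bar>y - x\<bar> \<le> \<eta>"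
proof -
  define r where "r = (x + 1) / \<eta>"
  define k where "k = \<lfloor>r\<rfloor>"
  have N0: "N > 0" using assms by (cases "N = 0") auto
  have eta: "\<eta> = 2 / real N" using assms N0 by (auto simp: field_simps)
  have r0: "0 \<le> r" using assms unfolding r_def by auto
  have rN: "r \<le> real N" using assms unfolding r_def by (auto simp: field_simps eta)
  have k0: "0 \<le> k" using r0 unfolding k_def by auto
  have kr: "real_of_int k \<le> r" "r < real_of_int k + 1" unfolding k_def by linarith+
  have kN: "k \<le> int N" using kr rN by linarith
  have xr: "x = -1 + r * \<eta>" using assms unfolding r_def by (auto simp: field_simps)
  have p: "(x + 1 - real_of_int k * \<eta>) / \<eta> = r - real_of_int k"
    using assms unfolding r_def by (auto simp: field_simps)
  have q: "quant \<eta> x = map_pmf (\<lambda>b. if b then -1 + (real_of_int k + 1) * \<eta> else -1 + real_of_int k * \<eta>)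
       (bernoulli_pmf (r - real_of_int k))"
    unfolding quant_def Let_def k_def r_def using p[unfolded k_def r_def] by simp
  obtain b where b: "b \<in> set_pmf (bernoulli_pmf (r - real_of_int k))"
     "y = (if b then -1 + (real_of_int k + 1) * \<eta> else -1 + real_of_int k * \<eta>)"
    using assms(5) unfolding q by auto
  have gk: "-1 + real_of_int k * \<eta> \<in> grid \<eta>"
  proof -
    show ?thesis unfolding grid_eq[OF assms(1,2)]
      by (rule image_eqI[where x="nat k"]) (use k0 kN in auto)
  qed
  show ?thesis
  proof (cases b)
    case True
    then have "pmf (bernoulli_pmf (r - real_of_int k)) True \<noteq> 0" using b by (simp add: set_pmf_eq)
    then have rk: "r - real_of_int k \<noteq> 0" using kr by auto
    have "k + 1 \<le> int N"
    proof (rule ccontr)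
      assume "\<not> k + 1 \<le> int N"
      then have "k = int N" using kN by auto
      then show False using rk rN kr by auto
    qed
    then have "-1 + (real_of_int k + 1) * \<eta> = -1 + real (nat (k+1)) * \<eta>" "nat (k+1) \<le> N" using k0 by auto
    then have g: "y \<in> grid \<eta>" using grid_eq[OF assms(1,2)] True b by auto
    have "\<bar>y - x\<bar> = \<bar>(real_of_int k + 1 - r) * \<eta>\<bar>" using True b xr by (simp add: algebra_simps)
    also have "\<dots> \<le> \<eta>" using kr assms(1) by (simp add: abs_mult)
    finally show ?thesis using g by simp
  next
    case False
    have "\<bar>y - x\<bar> = \<bar>(real_of_int k - r) * \<eta>\<bar>" using False b xr by (simp add: algebra_simps)
    also have "\<dots> \<le> \<eta>" using kr assms(1) by (simp add: abs_mult)
    finally show ?thesis using gk False b by simp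
  qed
qed

lemma quant_data_support:
  assumes "DQ \<in> set_pmf (quant_data d q \<eta> v)" "j < q" "i < d"
  shows "DQ (j, i) \<in> set_pmf (quant \<eta> (sqrt (real d / 2) * v j i))"
  using set_Pi_pmf_subset'[of "{..<q} \<times> {..<d}" 0 "\<lambda>(j, i). quant \<eta> (sqrt (real d / 2) * v j i)"]
    assms unfolding quant_data_def PiE_dflt_def by auto



definition mI :: "nat \<Rightarrow> real \<Rightarrow> distr \<Rightarrow> nat \<Rightarrow> real" where
  "mI d \<eta> P i = (\<Sum>x\<in>gridD d \<eta>. P x * x i)"

lemma wP_eq:
  assumes "i < d"
  shows "wP d q \<eta> P i = real q * mI d \<eta> P i"
proof -
  have "(\<Sum>s\<in>grid \<eta>. s * marginal d \<eta> P i s) = (\<Sum>s\<in>grid \<eta>. \<Sum>x\<in>{x\<in>gridD d \<eta>. x i = s}. P x * x i)"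
    unfolding marginal_def by (intro sum.cong refl) (auto simp: sum_distrib_left mult.commute)
  also have "\<dots> = (\<Sum>x\<in>gridD d \<eta>. P x * x i)"
    using gridD_coord[OF _ assms] by (intro sum.group gridD_finite grid_finite) auto
  finally show ?thesis unfolding wP_def mI_def by simp
qed

lemma mI_add: "mI d \<eta> (\<lambda>s. A s + B s) i = mI d \<eta> A i + mI d \<eta> B i"
  unfolding mI_def by (simp add: distrib_right sum.distrib)

lemma mI_div: "mI d \<eta> (\<lambda>s. A s / c) i = mI d \<eta> A i / c"
  unfolding mI_def by (simp add: sum_divide_distrib)

definition valid :: "nat \<Rightarrow> real \<Rightarrow> distr \<Rightarrow> bool" where
  "valid d \<eta> P \<longleftrightarrow> (\<forall>x\<in>gridD d \<eta>. 0 < P x) \<and> (\<forall>x. x \<notin> gridD d \<eta> \<longrightarrow> P x = 0)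
     \<and> (\<Sum>x\<in>gridD d \<eta>. P x) = 1"

lemma valid_P0:
  assumes "\<eta> > 0" "2 / \<eta> = real N"
  shows "valid d \<eta> (P0 d \<eta>)"
proof -
  have ne: "gridD d \<eta> \<noteq> {}" by (rule gridD_nonempty[OF assms])
  then have c: "card (gridD d \<eta>) > 0" using gridD_finite card_gt_0_iff by blast
  have "(\<Sum>x\<in>gridD d \<eta>. P0 d \<eta> x) = (\<Sum>x\<in>gridD d \<eta>. 1 / real (card (gridD d \<eta>)))"
    unfolding P0_def by (intro sum.cong) auto
  also have "\<dots> = 1" using c by simp
  finally show ?thesis unfolding valid_def using c by (auto simp: P0_def)
qed

lemma valid_le1:
  assumes "valid d \<eta> P" "x \<in> gridD d \<eta>"
  shows "P x \<le> 1"
proof -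
  have "P x \<le> (\<Sum>y\<in>gridD d \<eta>. P y)"
    using assms unfolding valid_def by (intro member_le_sum gridD_finite) auto
  then show ?thesis using assms unfolding valid_def by simp
qed

lemma mI_bound:
  assumes "valid d \<eta> P" "\<eta> > 0" "2 / \<eta> = real N" "i < d"
  shows "\<bar>mI d \<eta> P i\<bar> \<le> 1"
proof -
  have "\<bar>mI d \<eta> P i\<bar> \<le> (\<Sum>x\<in>gridD d \<eta>. \<bar>P x * x i\<bar>)" unfolding mI_def by (rule sum_abs)
  also have "\<dots> \<le> (\<Sum>x\<in>gridD d \<eta>. P x)"
  proof (intro sum_mono)
    fix x assume x: "x \<in> gridD d \<eta>"
    have "\<bar>x i\<bar> \<le> 1" using grid_bound[OF assms(2,3) gridD_coord[OF x assms(4)]] by auto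
    moreover have "P x > 0" using assms(1) x unfolding valid_def by auto
    ultimately show "\<bar>P x * x i\<bar> \<le> P x" by (simp add: abs_mult mult_left_le)
  qed
  also have "\<dots> = 1" using assms(1) unfolding valid_def by auto
  finally show ?thesis .
qed

definition Zf :: "nat \<Rightarrow> real \<Rightarrow> distr \<Rightarrow> nat \<Rightarrow> real \<Rightarrow> real" where
  "Zf d \<eta> P i l = (\<Sum>x\<in>gridD d \<eta>. P x * exp (l * x i))"

lemma upd_eq:
  "upd d q \<eta> P i \<mu> = (\<lambda>s. P s * exp (((\<mu> - wP d q \<eta> P i) / (2 * real q)) * s i) /
       Zf d \<eta> P i ((\<mu> - wP d q \<eta> P i) / (2 * real q)))"
  unfolding upd_def Zf_def Let_def by (intro ext) (simp add: mult.commute)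

lemma Zf_pos: "valid d \<eta> P \<Longrightarrow> \<eta> > 0 \<Longrightarrow> 2 / \<eta> = real N \<Longrightarrow> Zf d \<eta> P i l > 0"
  unfolding Zf_def valid_def
  by (intro sum_pos gridD_finite gridD_nonempty) auto

lemma valid_upd:
  assumes "valid d \<eta> P" "\<eta> > 0" "2 / \<eta> = real N"
  shows "valid d \<eta> (upd d q \<eta> P i \<mu>)"
proof -
  define l where "l = (\<mu> - wP d q \<eta> P i) / (2 * real q)"
  have Z: "Zf d \<eta> P i l > 0" by (rule Zf_pos[OF assms])
  have u: "upd d q \<eta> P i \<mu> = (\<lambda>s. P s * exp (l * s i) / Zf d \<eta> P i l)"
    unfolding upd_eq l_def by simp
  show ?thesis unfolding u valid_def
  proof (intro conjI ballI allI impI)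
    fix x assume "x \<in> gridD d \<eta>" then show "0 < P x * exp (l * x i) / Zf d \<eta> P i l"
      using assms(1) Z unfolding valid_def by auto
  next
    fix x assume "x \<notin> gridD d \<eta>" then show "P x * exp (l * x i) / Zf d \<eta> P i l = 0"
      using assms(1) unfolding valid_def by auto
  next
    show "(\<Sum>x\<in>gridD d \<eta>. P x * exp (l * x i) / Zf d \<eta> P i l) = 1"
      using Z unfolding sum_divide_distrib[symmetric] by (simp add: Zf_def)
  qed
qed

definition row :: "nat \<Rightarrow> (nat \<times> nat \<Rightarrow> real) \<Rightarrow> nat \<Rightarrow> nat \<Rightarrow> real" where
  "row d DQ j = (\<lambda>i. if i < d then DQ (j, i) else undefined)"

definition goodDQ :: "nat \<Rightarrow> nat \<Rightarrow> real \<Rightarrow> (nat \<times> nat \<Rightarrow> real) \<Rightarrow> bool" where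
  "goodDQ d q \<eta> DQ \<longleftrightarrow> (\<forall>j<q. \<forall>i<d. DQ (j, i) \<in> grid \<eta>)"

lemma row_in: "goodDQ d q \<eta> DQ \<Longrightarrow> j < q \<Longrightarrow> row d DQ j \<in> gridD d \<eta>"
  unfolding goodDQ_def row_def gridD_def by (intro PiE_I) auto

definition Phi :: "nat \<Rightarrow> nat \<Rightarrow> (nat \<times> nat \<Rightarrow> real) \<Rightarrow> distr \<Rightarrow> real" where
  "Phi d q DQ P = - (\<Sum>j<q. ln (P (row d DQ j))) / real q"

lemma Phi_nonneg:
  assumes "valid d \<eta> P" "goodDQ d q \<eta> DQ"
  shows "Phi d q DQ P \<ge> 0"
proof -
  have "(\<Sum>j<q. ln (P (row d DQ j))) \<le> 0"
  proof (intro sum_nonpos)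
    fix j assume "j \<in> {..<q}"
    then have r: "row d DQ j \<in> gridD d \<eta>" using row_in[OF assms(2)] by auto
    then have "P (row d DQ j) > 0" "P (row d DQ j) \<le> 1" using assms(1) valid_le1 unfolding valid_def by auto
    then show "ln (P (row d DQ j)) \<le> 0" by simp
  qed
  then show ?thesis unfolding Phi_def by (simp add: divide_nonpos_nonneg)
qed

lemma Phi_P0:
  assumes "\<eta> > 0" "2 / \<eta> = real N" "goodDQ d q \<eta> DQ" "q > 0"
  shows "Phi d q DQ (P0 d \<eta>) = real d * ln (real N + 1)"
proof -
  have "(\<Sum>j<q. ln (P0 d \<eta> (row d DQ j))) = (\<Sum>j<q. - ln (real ((N + 1) ^ d)))"
    using row_in[OF assms(3)] gridD_card[OF assms(1,2)] unfolding P0_def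
    by (intro sum.cong refl) (simp add: ln_div)
  also have "\<dots> = - real q * (real d * ln (real N + 1))"
    by (simp add: ln_realpow)
  finally show ?thesis unfolding Phi_def using assms(4) by simp
qed

lemma Phi_upd:
  assumes "valid d \<eta> P" "\<eta> > 0" "2 / \<eta> = real N" "goodDQ d q \<eta> DQ" "q > 0" "i < d"
  shows "Phi d q DQ (upd d q \<eta> P i \<mu>) = Phi d q DQ P
     - ((\<mu> - wP d q \<eta> P i) / (2 * real q)) * (wDQ q DQ i / real q)
     + ln (Zf d \<eta> P i ((\<mu> - wP d q \<eta> P i) / (2 * real q)))"
proof -
  define l where "l = (\<mu> - wP d q \<eta> P i) / (2 * real q)"
  define Z where "Z = Zf d \<eta> P i l"
  have Z: "Z > 0" unfolding Z_def by (rule Zf_pos[OF assms(1-3)])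
  have u: "upd d q \<eta> P i \<mu> = (\<lambda>s. P s * exp (l * s i) / Z)"
    unfolding upd_eq l_def Z_def by simp
  have "(\<Sum>j<q. ln (upd d q \<eta> P i \<mu> (row d DQ j))) =
        (\<Sum>j<q. ln (P (row d DQ j)) + l * DQ (j, i) - ln Z)"
  proof (intro sum.cong refl)
    fix j assume "j \<in> {..<q}"
    then have r: "row d DQ j \<in> gridD d \<eta>" using row_in[OF assms(4)] by auto
    then have p: "P (row d DQ j) > 0" using assms(1) unfolding valid_def by auto
    have "row d DQ j i = DQ (j, i)" using assms(6) unfolding row_def by simp
    then show "ln (upd d q \<eta> P i \<mu> (row d DQ j)) = ln (P (row d DQ j)) + l * DQ (j, i) - ln Z"
      unfolding u using p Z by (simp add: ln_div ln_mult)
  qed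
  also have "\<dots> = (\<Sum>j<q. ln (P (row d DQ j))) + l * wDQ q DQ i - real q * ln Z"
    unfolding wDQ_def by (simp add: sum.distrib sum_subtractf sum_distrib_left)
  finally show ?thesis unfolding Phi_def l_def[symmetric] Z_def[symmetric] using assms(5)
    by (simp add: field_simps)
qed



lemma hoeff_pos:
  fixes A :: "'a set" and w s :: "'a \<Rightarrow> real" and l :: real
  assumes "finite A" "\<And>x. x \<in> A \<Longrightarrow> 0 \<le> w x" "(\<Sum>x\<in>A. w x) = 1"
    "\<And>x. x \<in> A \<Longrightarrow> -1 \<le> s x \<and> s x \<le> 1" "l \<ge> 0"
  shows "(\<Sum>x\<in>A. w x * exp (l * s x)) \<le> exp (l * (\<Sum>x\<in>A. w x * s x) + l^2 / 2)"
proof -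
  define m where "m = (\<Sum>x\<in>A. w x * s x)"
  have conv: "exp (l * s x) \<le> (1 + s x) / 2 * exp l + (1 - s x) / 2 * exp (- l)" if x: "x \<in> A" for x
  proof -
    define y where "y = (1 - s x) / 2"
    have y: "0 \<le> y" "y \<le> 1" using assms(4)[OF x] unfolding y_def by auto
    have "exp (l * ((1 - y) *\<^sub>R 1 + y *\<^sub>R (-1))) \<le> (1 - y) * exp (l * 1) + y * exp (l * (-1))"
      using y by (intro convex_onD[OF convex_on_exp[OF assms(5)]]) auto
    moreover have "(1 - y) *\<^sub>R 1 + y *\<^sub>R (-1) = s x" unfolding y_def by (simp add: field_simps)
    moreover have "1 - y = (1 + s x) / 2" unfolding y_def by (simp add: field_simps)
    ultimately show ?thesis unfolding y_def by simp
  qed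
  have "(\<Sum>x\<in>A. w x * exp (l * s x)) \<le> (\<Sum>x\<in>A. w x * ((1 + s x) / 2 * exp l + (1 - s x) / 2 * exp (- l)))"
    using conv assms(2) by (intro sum_mono mult_left_mono) auto
  also have "\<dots> = (\<Sum>x\<in>A. exp l / 2 * w x + exp l / 2 * (w x * s x) + exp (- l) / 2 * w x - exp (- l) / 2 * (w x * s x))"
    by (intro sum.cong refl) (simp add: algebra_simps add_divide_distrib diff_divide_distrib)
  also have "\<dots> = exp l / 2 * (\<Sum>x\<in>A. w x) + exp l / 2 * m + exp (- l) / 2 * (\<Sum>x\<in>A. w x) - exp (- l) / 2 * m"
    unfolding m_def by (simp add: sum.distrib sum_subtractf sum_distrib_left)
  also have "\<dots> = (1 + m) / 2 * exp l + (1 - m) / 2 * exp (- l)"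
    using assms(3) by (simp add: algebra_simps add_divide_distrib diff_divide_distrib)
  finally have S: "(\<Sum>x\<in>A. w x * exp (l * s x)) \<le> (1 + m) / 2 * exp l + (1 - m) / 2 * exp (- l)" .
  have mb: "-1 \<le> m \<and> m \<le> 1"
  proof -
    have "\<bar>m\<bar> \<le> (\<Sum>x\<in>A. \<bar>w x * s x\<bar>)" unfolding m_def by (rule sum_abs)
    also have "\<dots> \<le> (\<Sum>x\<in>A. w x)"
    proof (intro sum_mono)
      fix x assume x: "x \<in> A"
      have "\<bar>s x\<bar> \<le> 1" using assms(4)[OF x] by (simp add: abs_le_iff)
      then show "\<bar>w x * s x\<bar> \<le> w x" using assms(2)[OF x] by (simp add: abs_mult mult_left_le)
    qed
    finally show ?thesis using assms(3) by auto
  qed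
  define p where "p = (1 + m) / 2"
  define h where "h = 2 * l"
  have p0: "p \<ge> 0" using mb unfolding p_def by auto
  have aux: "-h * p + ln (1 + p * (exp h - 1)) \<le> h\<^sup>2 / 8"
    using Hoeffdings_lemma_aux[of h p] p0 assms(5) unfolding h_def by auto
  have pos: "1 + p * (exp h - 1) > 0"
  proof -
    have "exp h \<ge> 1" using assms(5) unfolding h_def by simp
    then have "p * (exp h - 1) \<ge> 0" using p0 by simp
    then show ?thesis by simp
  qed
  have eq: "(1 + m) / 2 * exp l + (1 - m) / 2 * exp (- l) = exp (- l) * (1 + p * (exp h - 1))"
  proof -
    have e: "exp (- l) * exp h = exp l" unfolding h_def by (simp add: mult_exp_exp)
    have "exp (- l) * (1 + p * (exp h - 1)) = exp (- l) + p * (exp (- l) * exp h) - p * exp (- l)"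
      by (simp add: algebra_simps)
    also have "\<dots> = exp (- l) + p * exp l - p * exp (- l)" using e by simp
    finally show ?thesis unfolding p_def by (simp add: field_simps)
  qed
  have "exp (- l) * (1 + p * (exp h - 1)) = exp (- l + ln (1 + p * (exp h - 1)))"
    using pos by (simp add: exp_add exp_diff field_simps exp_minus_inverse)
  also have "\<dots> \<le> exp (l * m + l^2 / 2)"
  proof (subst exp_le_cancel_iff)
    have "- l + ln (1 + p * (exp h - 1)) \<le> -l + h * p + h\<^sup>2 / 8" using aux by linarith
    also have "\<dots> = l * m + l^2 / 2" unfolding h_def p_def by (simp add: algebra_simps power2_eq_square)
    finally show "- l + ln (1 + p * (exp h - 1)) \<le> l * m + l^2 / 2" .
  qed
  finally show ?thesis using S eq unfolding m_def by simp
qed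

lemma hoeff:
  fixes A :: "'a set" and w s :: "'a \<Rightarrow> real" and l :: real
  assumes "finite A" "\<And>x. x \<in> A \<Longrightarrow> 0 \<le> w x" "(\<Sum>x\<in>A. w x) = 1"
    "\<And>x. x \<in> A \<Longrightarrow> -1 \<le> s x \<and> s x \<le> 1"
  shows "(\<Sum>x\<in>A. w x * exp (l * s x)) \<le> exp (l * (\<Sum>x\<in>A. w x * s x) + l^2 / 2)"
proof (cases "l \<ge> 0")
  case True then show ?thesis using assms True by (intro hoeff_pos) auto
next
  case False
  have "(\<Sum>x\<in>A. w x * exp ((-l) * (- s x))) \<le> exp ((-l) * (\<Sum>x\<in>A. w x * (- s x)) + (-l)^2 / 2)"
    using False assms by (intro hoeff_pos) auto
  then show ?thesis by (simp add: sum_negf)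
qed

lemma em_bound:
  fixes u :: "nat \<Rightarrow> real" and \<epsilon> :: real
  assumes "d \<ge> 1" "\<epsilon> > 0"
  shows "(\<Sum>i<d. exp (\<epsilon> * u i) / (\<Sum>k<d. exp (\<epsilon> * u k)) * u i)
         \<ge> Max (u ` {..<d}) - ln (real d) / \<epsilon>"
proof -
  define Z where "Z = (\<Sum>k<d. exp (\<epsilon> * u k))"
  define p where "p = (\<lambda>i. exp (\<epsilon> * u i) / Z)"
  have ne: "{..<d} \<noteq> {}" using assms by (simp add: lessThan_empty_iff)
  have Zp: "Z > 0" unfolding Z_def using ne by (intro sum_pos) auto
  have pp: "p i > 0" for i unfolding p_def using Zp by simp
  have ps: "(\<Sum>i<d. p i) = 1" unfolding p_def using Zp by (simp add: sum_divide_distrib[symmetric] Z_def)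
  have pn: "p i \<noteq> 0" for i using pp[of i] by simp
  have lnp: "ln (p i) = \<epsilon> * u i - ln Z" for i unfolding p_def using Zp by (simp add: ln_div)
  have "Max (u ` {..<d}) \<in> u ` {..<d}" by (rule Max_in) (use ne in auto)
  then obtain i0 where i0: "i0 < d" "u i0 = Max (u ` {..<d})" by (metis imageE lessThan_iff)
  have Zge: "Z \<ge> exp (\<epsilon> * u i0)" unfolding Z_def using i0 by (intro member_le_sum) auto
  then have lnZ: "ln Z \<ge> \<epsilon> * u i0" using Zp by (metis exp_gt_zero ln_exp ln_le_cancel_iff)
  have "(\<Sum>i<d. p i * ln (1 / (real d * p i))) \<le> (\<Sum>i<d. p i * (1 / (real d * p i) - 1))"
    using pp assms by (intro sum_mono mult_left_mono ln_le_minus_one) (auto simp: less_imp_le)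
  also have "\<dots> = (\<Sum>i<d. 1 / real d - p i)"
    using pp pn assms by (intro sum.cong refl) (simp add: field_simps)
  also have "\<dots> = 0" using ps assms by (simp add: sum_subtractf)
  finally have H: "(\<Sum>i<d. p i * ln (1 / (real d * p i))) \<le> 0" .
  have lz: "(\<Sum>i<d. ln Z * p i) = ln Z" "(\<Sum>i<d. ln (real d) * p i) = ln (real d)"
    using ps by (simp_all add: sum_distrib_left[symmetric])
  have "(\<Sum>i<d. p i * ln (1 / (real d * p i))) = (\<Sum>i<d. p i * (- ln (real d) - (\<epsilon> * u i - ln Z)))"
    using pp pn assms by (intro sum.cong refl) (simp add: ln_div ln_mult lnp)
  also have "\<dots> = - ln (real d) - \<epsilon> * (\<Sum>i<d. p i * u i) + ln Z"
    using ps lz by (simp add: algebra_simps sum.distrib sum_subtractf sum_distrib_left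
        sum_distrib_right[symmetric])
  finally have "\<epsilon> * (\<Sum>i<d. p i * u i) \<ge> ln Z - ln (real d)" using H by linarith
  then have "\<epsilon> * (\<Sum>i<d. p i * u i) \<ge> \<epsilon> * (u i0 - ln (real d) / \<epsilon>)"
    using lnZ assms by (simp add: algebra_simps)
  then have "(\<Sum>i<d. p i * u i) \<ge> u i0 - ln (real d) / \<epsilon>"
    using assms by (simp add: mult_le_cancel_left_pos)
  then show ?thesis using i0 unfolding p_def Z_def by simp
qed

lemma integral_le_nonneg_bound:
  fixes f g :: "'a \<Rightarrow> real"
  assumes "\<And>x. x \<in> space M \<Longrightarrow> f x \<le> g x" "integrable M g" "\<And>x. x \<in> space M \<Longrightarrow> 0 \<le> g x"
  shows "integral\<^sup>L M f \<le> integral\<^sup>L M g"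
proof (cases "integrable M f")
  case True then show ?thesis using assms by (intro integral_mono) auto
next
  case False then show ?thesis using assms by (simp add: not_integrable_integral_eq integral_nonneg)
qed



definition lapf :: "real \<Rightarrow> real \<Rightarrow> real" where
  "lapf \<epsilon> x = \<epsilon> / 2 * exp (- \<epsilon> * \<bar>x\<bar>)"

lemma lapf_meas[measurable]: "lapf \<epsilon> \<in> borel_measurable borel"
  unfolding lapf_def by measurable

lemma laplace_eq: "laplace \<epsilon> = density lborel (\<lambda>x. ennreal (lapf \<epsilon> x))"
  unfolding laplace_def lapf_def by simp

lemma lap_nn_moment:
  assumes e: "\<epsilon> > 0"
  shows "(\<integral>\<^sup>+x. ennreal (lapf \<epsilon> x * \<bar>x\<bar> ^ k) \<partial>lborel) = ennreal (fact k / \<epsilon> ^ k)"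
proof -
  define ed where "ed = erlang_density 0 \<epsilon>"
  have ed: "ed x = (if x < 0 then 0 else \<epsilon> * exp (- \<epsilon> * x))" for x
    unfolding ed_def erlang_density_def by simp
  have edn: "0 \<le> ed x * x ^ k" for x unfolding ed using e by auto
  have edn': "0 \<le> ed (- x) * (- x) ^ k" for x using edn[of "-x"] .
  have edm[measurable]: "ed \<in> borel_measurable borel" unfolding ed_def by measurable
  define F where "F = fact k / \<epsilon> ^ k"
  have J: "(\<integral>\<^sup>+x. ennreal (ed x * x ^ k) \<partial>lborel) = ennreal F"
    using nn_integral_erlang_ith_moment[OF e, of 0 k] unfolding ed_def F_def by simp
  have J': "(\<integral>\<^sup>+x. ennreal (ed (- x) * (- x) ^ k) \<partial>lborel) = ennreal F"
  proof -
    have "(\<integral>\<^sup>+x. ennreal (ed x * x ^ k) \<partial>lborel)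
        = ennreal \<bar>-1\<bar> * (\<integral>\<^sup>+x. ennreal (ed (0 + (-1) * x) * (0 + (-1) * x) ^ k) \<partial>lborel)"
      by (rule nn_integral_real_affine) auto
    then show ?thesis using J by simp
  qed
  have pt: "ennreal (lapf \<epsilon> x * \<bar>x\<bar> ^ k) =
      (ennreal (ed x * x ^ k) + ennreal (ed (- x) * (- x) ^ k)) * ennreal (1 / 2)" if x: "x \<noteq> 0" for x
  proof -
    have E: "lapf \<epsilon> x * \<bar>x\<bar> ^ k = (ed x * x ^ k + ed (- x) * (- x) ^ k) * (1 / 2)"
    proof (cases "x < 0")
      case True then show ?thesis unfolding ed lapf_def by (simp add: abs_if)
    next
      case False then have "x > 0" using x by auto
      then show ?thesis unfolding ed lapf_def by (simp add: abs_if)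
    qed
    have a: "ennreal ((ed x * x ^ k + ed (- x) * (- x) ^ k) * (1 / 2)) =
        ennreal (ed x * x ^ k + ed (- x) * (- x) ^ k) * ennreal (1 / 2)"
      by (rule ennreal_mult) (use edn edn' in auto)
    have b: "ennreal (ed x * x ^ k + ed (- x) * (- x) ^ k) = ennreal (ed x * x ^ k) + ennreal (ed (- x) * (- x) ^ k)"
      by (rule ennreal_plus) (use edn edn' in auto)
    show ?thesis unfolding E a b by (rule refl)
  qed
  have "(\<integral>\<^sup>+x. ennreal (lapf \<epsilon> x * \<bar>x\<bar> ^ k) \<partial>lborel)
      = (\<integral>\<^sup>+x. (ennreal (ed x * x ^ k) + ennreal (ed (- x) * (- x) ^ k)) * ennreal (1 / 2) \<partial>lborel)"
    by (intro nn_integral_cong_AE eventually_mono[OF AE_lborel_singleton[of 0]]) (use pt in auto)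
  also have "\<dots> = (\<integral>\<^sup>+x. (ennreal (ed x * x ^ k) + ennreal (ed (- x) * (- x) ^ k)) \<partial>lborel) * ennreal (1 / 2)"
    by (rule nn_integral_multc) measurable
  also have "\<dots> = (ennreal F + ennreal F) * ennreal (1 / 2)"
    by (subst nn_integral_add) (auto simp: J J')
  also have "\<dots> = ennreal F"
  proof -
    have F0: "F \<ge> 0" unfolding F_def using e by simp
    have c1: "ennreal (F + F) = ennreal F + ennreal F" by (rule ennreal_plus[OF F0 F0])
    have c2: "ennreal ((F + F) * (1/2)) = ennreal (F + F) * ennreal (1/2)" using F0 by (intro ennreal_mult) auto
    have c3: "(F + F) * (1/2) = F" by simp
    show ?thesis using c1 c2 c3 by metis
  qed
  finally show ?thesis unfolding F_def .
qed

lemma lap_hb: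
  assumes e: "\<epsilon> > 0"
  shows "has_bochner_integral lborel (\<lambda>x. lapf \<epsilon> x * \<bar>x\<bar> ^ k) (fact k / \<epsilon> ^ k)"
  by (rule has_bochner_integral_nn_integral) (use e lap_nn_moment[OF e] in \<open>auto simp: lapf_def\<close>)

lemma lap_odd:
  assumes e: "\<epsilon> > 0"
  shows "integrable lborel (\<lambda>x. lapf \<epsilon> x * x)" "(\<integral>x. lapf \<epsilon> x * x \<partial>lborel) = 0"
proof -
  have "integrable lborel (\<lambda>x. \<bar>lapf \<epsilon> x * x\<bar>)"
    using lap_hb[OF e, of 1] e by (simp add: abs_mult lapf_def integrable.intros)
  then show i: "integrable lborel (\<lambda>x. lapf \<epsilon> x * x)"
    by (subst (asm) integrable_abs_iff) auto
  have "(\<integral>x. lapf \<epsilon> x * x \<partial>lborel) = \<bar>-1\<bar> *\<^sub>R (\<integral>x. lapf \<epsilon> (0 + (-1) * x) * (0 + (-1) * x) \<partial>lborel)"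
    by (rule lborel_integral_real_affine) simp
  also have "\<dots> = - (\<integral>x. lapf \<epsilon> x * x \<partial>lborel)"
    by (simp add: lapf_def)
  finally show "(\<integral>x. lapf \<epsilon> x * x \<partial>lborel) = 0" by simp
qed

lemma lap_poly:
  assumes e: "\<epsilon> > 0"
  shows "integrable (laplace \<epsilon>) (\<lambda>z. c0 + c1 * z + c2 * z^2)"
    "(\<integral>z. c0 + c1 * z + c2 * z^2 \<partial>laplace \<epsilon>) = c0 + c2 * (2 / \<epsilon>^2)"
proof -
  have nn: "AE x in lborel. 0 \<le> lapf \<epsilon> x" using e by (auto simp: lapf_def)
  have h0: "has_bochner_integral lborel (\<lambda>x. lapf \<epsilon> x) 1" using lap_hb[OF e, of 0] by simp
  have h2: "has_bochner_integral lborel (\<lambda>x. lapf \<epsilon> x * x^2) (2 / \<epsilon>^2)" using lap_hb[OF e, of 2] by simp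
  have eq: "(\<lambda>x. lapf \<epsilon> x *\<^sub>R (c0 + c1 * x + c2 * x^2)) =
     (\<lambda>x. c0 * lapf \<epsilon> x + c1 * (lapf \<epsilon> x * x) + c2 * (lapf \<epsilon> x * x^2))"
    by (auto simp: algebra_simps)
  have hb: "has_bochner_integral lborel (\<lambda>x. lapf \<epsilon> x *\<^sub>R (c0 + c1 * x + c2 * x^2)) (c0 * 1 + c1 * 0 + c2 * (2 / \<epsilon>^2))"
    unfolding eq
    by (intro has_bochner_integral_add has_bochner_integral_mult_right h0 h2)
       (use lap_odd[OF e] in \<open>auto simp: has_bochner_integral_iff\<close>)
  show "integrable (laplace \<epsilon>) (\<lambda>z. c0 + c1 * z + c2 * z^2)"
    unfolding laplace_eq using hb nn by (subst integrable_density) (auto simp: integrable.intros)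
  show "(\<integral>z. c0 + c1 * z + c2 * z^2 \<partial>laplace \<epsilon>) = c0 + c2 * (2 / \<epsilon>^2)"
    unfolding laplace_eq using hb nn by (subst integral_density) (auto simp: has_bochner_integral_iff)
qed



definition aI :: "nat \<Rightarrow> (nat \<times> nat \<Rightarrow> real) \<Rightarrow> nat \<Rightarrow> real" where
  "aI q DQ i = wDQ q DQ i / real q"

definition MM :: "nat \<Rightarrow> nat \<Rightarrow> real \<Rightarrow> (nat \<times> nat \<Rightarrow> real) \<Rightarrow> distr \<Rightarrow> real" where
  "MM d q \<eta> DQ P = Max ((\<lambda>i. \<bar>aI q DQ i - mI d \<eta> P i\<bar>) ` {..<d})"

lemma em_prob_nonneg: "em_prob d q \<eta> \<epsilon> DQ P i \<ge> 0"
  unfolding em_prob_def by (intro divide_nonneg_nonneg sum_nonneg) auto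

lemma em_prob_sum: "d \<ge> 1 \<Longrightarrow> (\<Sum>i<d. em_prob d q \<eta> \<epsilon> DQ P i) = 1"
proof -
  assume d: "d \<ge> 1"
  have ne: "{..<d} \<noteq> {}" using d by (simp add: lessThan_empty_iff)
  have "(\<Sum>k<d. exp (\<epsilon> * \<bar>wP d q \<eta> P k - wDQ q DQ k\<bar>)) > 0"
    using ne by (intro sum_pos) auto
  then show ?thesis unfolding em_prob_def by (simp add: sum_divide_distrib[symmetric])
qed

lemma aI_bound:
  assumes "goodDQ d q \<eta> DQ" "\<eta> > 0" "2 / \<eta> = real N" "q \<ge> 1" "i < d"
  shows "\<bar>aI q DQ i\<bar> \<le> 1"
proof -
  have "\<bar>wDQ q DQ i\<bar> \<le> (\<Sum>j<q. \<bar>DQ (j, i)\<bar>)" unfolding wDQ_def by (rule sum_abs)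
  also have "\<dots> \<le> (\<Sum>j<q. 1)"
    using assms grid_bound[OF assms(2,3)] unfolding goodDQ_def by (intro sum_mono) (auto simp: abs_le_iff)
  finally show ?thesis using assms(4) unfolding aI_def by (simp add: divide_le_eq_1 abs_div)
qed

lemma MM_bounds:
  assumes "goodDQ d q \<eta> DQ" "\<eta> > 0" "2 / \<eta> = real N" "q \<ge> 1" "d \<ge> 1" "valid d \<eta> P"
  shows "0 \<le> MM d q \<eta> DQ P" "MM d q \<eta> DQ P \<le> 2"
    "\<And>i. i < d \<Longrightarrow> \<bar>aI q DQ i - mI d \<eta> P i\<bar> \<le> MM d q \<eta> DQ P"
proof -
  have ne: "{..<d} \<noteq> {}" using assms by (simp add: lessThan_empty_iff)
  show ge: "\<And>i. i < d \<Longrightarrow> \<bar>aI q DQ i - mI d \<eta> P i\<bar> \<le> MM d q \<eta> DQ P"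
    unfolding MM_def by (intro Max_ge) auto
  show "0 \<le> MM d q \<eta> DQ P" using ge[of 0] assms by force
  show "MM d q \<eta> DQ P \<le> 2" unfolding MM_def
  proof (subst Max_le_iff)
    show "\<forall>a\<in>(\<lambda>i. \<bar>aI q DQ i - mI d \<eta> P i\<bar>) ` {..<d}. a \<le> 2"
    proof
      fix a assume "a \<in> (\<lambda>i. \<bar>aI q DQ i - mI d \<eta> P i\<bar>) ` {..<d}"
      then obtain i where i: "i < d" "a = \<bar>aI q DQ i - mI d \<eta> P i\<bar>" by auto
      have "\<bar>aI q DQ i\<bar> \<le> 1" by (rule aI_bound[OF assms(1-4) i(1)])
      moreover have "\<bar>mI d \<eta> P i\<bar> \<le> 1" by (rule mI_bound[OF assms(6,2,3) i(1)])
      ultimately show "a \<le> 2" using i by linarith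
    qed
  qed (use ne in auto)
qed

lemma main_induct:
  fixes F :: "distr \<Rightarrow> real" and \<rho> :: "nat \<Rightarrow> distr \<Rightarrow> real"
    and ka kb kc :: "nat \<Rightarrow> distr \<Rightarrow> nat \<Rightarrow> real"
  assumes good: "goodDQ d q \<eta> DQ" and eta: "\<eta> > 0" "2 / \<eta> = real N" and q: "q \<ge> 1" and d: "d \<ge> 1"
    and e: "\<epsilon> > 0"
    and Cq: "Cq \<ge> 0" and c: "c \<ge> 0"
    and F: "\<And>Ps. F Ps \<le> Cq + c * Max ((\<lambda>i. \<bar>Tr * aI q DQ i - mI d \<eta> Ps i\<bar>) ` {..<d})"
    and rho0: "\<And>n P. valid d \<eta> P \<Longrightarrow> \<rho> n P \<ge> 0"
    and H1: "\<And>n P i z. valid d \<eta> P \<Longrightarrow> i < d \<Longrightarrow>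
       MM d q \<eta> DQ (upd d q \<eta> P i (wDQ q DQ i + z)) + \<rho> n (upd d q \<eta> P i (wDQ q DQ i + z))
         \<le> ka n P i + kb n P i * z + kc n P i * z^2"
    and H2: "\<And>n P. valid d \<eta> P \<Longrightarrow>
       (\<Sum>i<d. em_prob d q \<eta> \<epsilon> DQ P i * (ka n P i + kc n P i * (2 / \<epsilon>^2))) \<le> \<rho> (Suc n) P"
  shows "valid d \<eta> P \<Longrightarrow> h2_exp d q \<eta> \<epsilon> DQ F n P Ps \<le>
     Cq + c * (Max ((\<lambda>i. \<bar>(Tr - real n) * aI q DQ i - mI d \<eta> Ps i\<bar>) ` {..<d}) + \<rho> n P)"
proof (induction n arbitrary: P Ps)
  case 0
  have "F Ps \<le> Cq + c * Max ((\<lambda>i. \<bar>Tr * aI q DQ i - mI d \<eta> Ps i\<bar>) ` {..<d})" by (rule F)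
  also have "\<dots> \<le> Cq + c * (Max ((\<lambda>i. \<bar>Tr * aI q DQ i - mI d \<eta> Ps i\<bar>) ` {..<d}) + \<rho> 0 P)"
    using rho0[OF 0] c by (simp add: mult_left_mono)
  finally show ?case by simp
next
  case (Suc n)
  have ne: "{..<d} \<noteq> {}" using d by (simp add: lessThan_empty_iff)
  define X where "X = Max ((\<lambda>i. \<bar>(Tr - real (Suc n)) * aI q DQ i - mI d \<eta> Ps i\<bar>) ` {..<d})"
  have Xge: "\<bar>(Tr - real (Suc n)) * aI q DQ i - mI d \<eta> Ps i\<bar> \<le> X" if "i < d" for i
    unfolding X_def using that by (intro Max_ge) auto
  have X0: "X \<ge> 0"
  proof -
    have "0 < d" using d by simp
    from Xge[OF this] show ?thesis by linarith
  qed
  define g where "g = (\<lambda>i z. (Cq + c * X + c * ka n P i) + (c * kb n P i) * z + (c * kc n P i) * z^2)"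
  have step: "(\<integral>z. (let P' = upd d q \<eta> P i (wDQ q DQ i + z)
               in h2_exp d q \<eta> \<epsilon> DQ F n P' (\<lambda>s. Ps s + P' s)) \<partial>laplace \<epsilon>)
        \<le> (Cq + c * X + c * ka n P i) + (c * kc n P i) * (2 / \<epsilon>^2)" if i: "i < d" for i
  proof -
    have pw: "(let P' = upd d q \<eta> P i (wDQ q DQ i + z)
               in h2_exp d q \<eta> \<epsilon> DQ F n P' (\<lambda>s. Ps s + P' s)) \<le> g i z
          \<and> 0 \<le> g i z" for z
    proof -
      define P' where "P' = upd d q \<eta> P i (wDQ q DQ i + z)"
      have v: "valid d \<eta> P'" unfolding P'_def by (rule valid_upd[OF Suc.prems eta])
      have I1: "h2_exp d q \<eta> \<epsilon> DQ F n P' (\<lambda>s. Ps s + P' s) \<le>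
          Cq + c * (Max ((\<lambda>k. \<bar>(Tr - real n) * aI q DQ k - mI d \<eta> (\<lambda>s. Ps s + P' s) k\<bar>) ` {..<d}) + \<rho> n P')"
        by (rule Suc.IH[OF v])
      have M: "Max ((\<lambda>k. \<bar>(Tr - real n) * aI q DQ k - mI d \<eta> (\<lambda>s. Ps s + P' s) k\<bar>) ` {..<d})
          \<le> X + MM d q \<eta> DQ P'"
      proof (subst Max_le_iff, simp, use ne in simp, intro ballI)
        fix a assume "a \<in> (\<lambda>k. \<bar>(Tr - real n) * aI q DQ k - mI d \<eta> (\<lambda>s. Ps s + P' s) k\<bar>) ` {..<d}"
        then obtain k where k: "k < d" "a = \<bar>(Tr - real n) * aI q DQ k - mI d \<eta> (\<lambda>s. Ps s + P' s) k\<bar>" by auto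
        have "a = \<bar>((Tr - real (Suc n)) * aI q DQ k - mI d \<eta> Ps k) + (aI q DQ k - mI d \<eta> P' k)\<bar>"
          using k by (simp add: mI_add algebra_simps)
        also have "\<dots> \<le> X + MM d q \<eta> DQ P'"
          using Xge[OF k(1)] MM_bounds(3)[OF good eta q d v k(1)] by linarith
        finally show "a \<le> X + MM d q \<eta> DQ P'" .
      qed
      have M2: "c * (Max ((\<lambda>k. \<bar>(Tr - real n) * aI q DQ k - mI d \<eta> (\<lambda>s. Ps s + P' s) k\<bar>) ` {..<d}) + \<rho> n P')
          \<le> c * (X + MM d q \<eta> DQ P' + \<rho> n P')"
        using M c by (intro mult_left_mono) auto
      have A: "h2_exp d q \<eta> \<epsilon> DQ F n P' (\<lambda>s. Ps s + P' s) \<le> Cq + c * (X + MM d q \<eta> DQ P' + \<rho> n P')"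
        using I1 M2 by linarith
      have B: "MM d q \<eta> DQ P' + \<rho> n P' \<le> ka n P i + kb n P i * z + kc n P i * z^2"
        unfolding P'_def by (rule H1[OF Suc.prems i])
      have B2: "c * (MM d q \<eta> DQ P' + \<rho> n P') \<le> c * (ka n P i + kb n P i * z + kc n P i * z^2)"
        using B c by (rule mult_left_mono)
      have E1: "g i z = Cq + c * X + c * (ka n P i + kb n P i * z + kc n P i * z^2)"
        unfolding g_def by (simp add: algebra_simps)
      have E2: "Cq + c * (X + MM d q \<eta> DQ P' + \<rho> n P') = Cq + c * X + c * (MM d q \<eta> DQ P' + \<rho> n P')"
        by (simp add: algebra_simps)
      have "Cq + c * (X + MM d q \<eta> DQ P' + \<rho> n P') \<le> g i z"
        using B2 E1 E2 by linarith
      moreover have "0 \<le> Cq + c * (X + MM d q \<eta> DQ P' + \<rho> n P')"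
        using Cq c X0 MM_bounds(1)[OF good eta q d v] rho0[OF v] by simp
      ultimately show ?thesis using A unfolding P'_def Let_def by linarith
    qed
    have "(\<integral>z. (let P' = upd d q \<eta> P i (wDQ q DQ i + z)
               in h2_exp d q \<eta> \<epsilon> DQ F n P' (\<lambda>s. Ps s + P' s)) \<partial>laplace \<epsilon>) \<le> (\<integral>z. g i z \<partial>laplace \<epsilon>)"
      using pw unfolding g_def by (intro integral_le_nonneg_bound lap_poly(1)[OF e]) auto
    also have "\<dots> = (Cq + c * X + c * ka n P i) + (c * kc n P i) * (2 / \<epsilon>^2)"
      unfolding g_def by (rule lap_poly(2)[OF e])
    finally show ?thesis .
  qed
  define p where "p = em_prob d q \<eta> \<epsilon> DQ P"
  define G where "G = (\<lambda>i. (Cq + c * X + c * ka n P i) + (c * kc n P i) * (2 / \<epsilon>^2))"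
  have S1: "h2_exp d q \<eta> \<epsilon> DQ F (Suc n) P Ps \<le> (\<Sum>i<d. p i * G i)"
    unfolding h2_exp.simps p_def G_def
    by (intro sum_mono mult_left_mono step em_prob_nonneg) auto
  have pG: "p i * G i = p i * (Cq + c * X) + c * (p i * (ka n P i + kc n P i * (2 / \<epsilon>^2)))" for i
    unfolding G_def by (simp add: algebra_simps)
  have S2: "(\<Sum>i<d. p i * G i) = (\<Sum>i<d. p i) * (Cq + c * X) + c * (\<Sum>i<d. p i * (ka n P i + kc n P i * (2 / \<epsilon>^2)))"
    unfolding pG sum.distrib sum_distrib_right[symmetric] sum_distrib_left[symmetric] by (rule refl)
  have S3: "(\<Sum>i<d. p i) = 1" unfolding p_def by (rule em_prob_sum[OF d])
  have S4: "c * (\<Sum>i<d. p i * (ka n P i + kc n P i * (2 / \<epsilon>^2))) \<le> c * \<rho> (Suc n) P"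
    unfolding p_def using H2[OF Suc.prems] c by (rule mult_left_mono)
  have "h2_exp d q \<eta> \<epsilon> DQ F (Suc n) P Ps \<le> Cq + c * X + c * \<rho> (Suc n) P"
    using S1 S2 S3 S4 by simp
  then show ?case unfolding X_def by (simp add: distrib_left)
qed



lemma ln_Zf_bound:
  assumes "valid d \<eta> P" "\<eta> > 0" "2 / \<eta> = real N" "i < d"
  shows "ln (Zf d \<eta> P i l) \<le> l * mI d \<eta> P i + l^2 / 2"
proof -
  have Z: "Zf d \<eta> P i l > 0" by (rule Zf_pos[OF assms(1-3)])
  have "Zf d \<eta> P i l \<le> exp (l * mI d \<eta> P i + l^2 / 2)"
    unfolding Zf_def mI_def
    by (rule hoeff[OF gridD_finite])
       (use assms grid_bound[OF assms(2,3) gridD_coord] in \<open>auto simp: valid_def less_imp_le\<close>)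
  then have "ln (Zf d \<eta> P i l) \<le> ln (exp (l * mI d \<eta> P i + l^2 / 2))"
    using Z by (subst ln_le_cancel_iff) auto
  then show ?thesis by simp
qed

lemma Phi_step:
  assumes "valid d \<eta> P" "\<eta> > 0" "2 / \<eta> = real N" "goodDQ d q \<eta> DQ" "q \<ge> 1" "i < d"
  shows "Phi d q DQ (upd d q \<eta> P i (wDQ q DQ i + z)) \<le> Phi d q DQ P
     - 3 / 8 * (aI q DQ i - mI d \<eta> P i)^2 - (aI q DQ i - mI d \<eta> P i) * z / (4 * real q)
     + z^2 / (8 * real q ^ 2)"
proof -
  define a where "a = aI q DQ i"
  define m where "m = mI d \<eta> P i"
  define l where "l = (wDQ q DQ i + z - wP d q \<eta> P i) / (2 * real q)"
  have q0: "real q > 0" using assms by simp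
  have wq: "wDQ q DQ i = real q * a" unfolding a_def aI_def using q0 by simp
  have wp: "wP d q \<eta> P i = real q * m" unfolding m_def by (rule wP_eq[OF assms(6)])
  have l: "l = ((a - m) + z / real q) / 2" unfolding l_def wq wp using q0 by (simp add: field_simps)
  have "Phi d q DQ (upd d q \<eta> P i (wDQ q DQ i + z)) = Phi d q DQ P - l * a + ln (Zf d \<eta> P i l)"
    unfolding l_def using Phi_upd[OF assms(1-4) _ assms(6), of "wDQ q DQ i + z"] q0 wq
    by (simp add: a_def)
  also have "\<dots> \<le> Phi d q DQ P - l * a + (l * m + l^2 / 2)"
    using ln_Zf_bound[OF assms(1-3,6), of l] unfolding m_def by simp
  also have "\<dots> = Phi d q DQ P - 3 / 8 * (a - m)^2 - (a - m) * z / (4 * real q) + z^2 / (8 * real q ^ 2)"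
    unfolding l using q0 by (simp add: field_simps power2_eq_square)
  finally show ?thesis unfolding a_def m_def .
qed

lemma em_MM:
  assumes "valid d \<eta> P" "\<eta> > 0" "2 / \<eta> = real N" "goodDQ d q \<eta> DQ" "q \<ge> 1" "d \<ge> 1" "\<epsilon> > 0"
  shows "(\<Sum>i<d. em_prob d q \<eta> \<epsilon> DQ P i * \<bar>aI q DQ i - mI d \<eta> P i\<bar>)
     \<ge> MM d q \<eta> DQ P - ln (real d) / (real q * \<epsilon>)"
proof -
  have q0: "real q > 0" using assms by simp
  define u where "u = (\<lambda>i. real q * \<bar>aI q DQ i - mI d \<eta> P i\<bar>)"
  have uw: "\<bar>wP d q \<eta> P i - wDQ q DQ i\<bar> = u i" if "i < d" for i
  proof -
    have "wP d q \<eta> P i - wDQ q DQ i = real q * (mI d \<eta> P i - aI q DQ i)"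
      unfolding wP_eq[OF that] aI_def using q0 by (simp add: algebra_simps)
    then show ?thesis unfolding u_def using q0 by (simp add: abs_mult abs_minus_commute)
  qed
  have ep: "em_prob d q \<eta> \<epsilon> DQ P i = exp (\<epsilon> * u i) / (\<Sum>k<d. exp (\<epsilon> * u k))" if "i < d" for i
  proof -
    have Zs: "(\<Sum>k<d. exp (\<epsilon> * \<bar>wP d q \<eta> P k - wDQ q DQ k\<bar>)) = (\<Sum>k<d. exp (\<epsilon> * u k))"
      using uw by (intro sum.cong) auto
    show ?thesis unfolding em_prob_def Zs uw[OF that] by (rule refl)
  qed
  have ne: "{..<d} \<noteq> {}" using assms by (simp add: lessThan_empty_iff)
  have "MM d q \<eta> DQ P \<in> (\<lambda>i. \<bar>aI q DQ i - mI d \<eta> P i\<bar>) ` {..<d}"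
    unfolding MM_def by (rule Max_in) (use ne in auto)
  then obtain i0 where i0: "i0 < d" "MM d q \<eta> DQ P = \<bar>aI q DQ i0 - mI d \<eta> P i0\<bar>" by auto
  have "u i0 \<le> Max (u ` {..<d})" using i0 by (intro Max_ge) auto
  also have "Max (u ` {..<d}) - ln (real d) / \<epsilon> \<le> (\<Sum>i<d. exp (\<epsilon> * u i) / (\<Sum>k<d. exp (\<epsilon> * u k)) * u i)"
    by (rule em_bound[OF assms(6,7)])
  also have "\<dots> = (\<Sum>i<d. em_prob d q \<eta> \<epsilon> DQ P i * u i)"
    using ep by (intro sum.cong) auto
  also have "\<dots> = real q * (\<Sum>i<d. em_prob d q \<eta> \<epsilon> DQ P i * \<bar>aI q DQ i - mI d \<eta> P i\<bar>)"
    unfolding u_def by (simp add: sum_distrib_left algebra_simps)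
  finally have "real q * MM d q \<eta> DQ P - ln (real d) / \<epsilon> \<le>
      real q * (\<Sum>i<d. em_prob d q \<eta> \<epsilon> DQ P i * \<bar>aI q DQ i - mI d \<eta> P i\<bar>)"
    using i0 unfolding u_def by simp
  then have "MM d q \<eta> DQ P - ln (real d) / (real q * \<epsilon>) \<le>
      (\<Sum>i<d. em_prob d q \<eta> \<epsilon> DQ P i * \<bar>aI q DQ i - mI d \<eta> P i\<bar>)"
    using q0 assms(7) by (simp add: field_simps)
  then show ?thesis by simp
qed



lemma amgm_abs:
  fixes t \<kappa> :: real assumes "\<kappa> > 0"
  shows "\<bar>t\<bar> \<le> 3 * \<kappa> / 8 * t^2 + 2 / (3 * \<kappa>)"
proof -
  have "0 \<le> 3 * \<kappa> / 8 * (\<bar>t\<bar> - 4 / (3 * \<kappa>))^2" using assms by simp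
  also have "3 * \<kappa> / 8 * (\<bar>t\<bar> - 4 / (3 * \<kappa>))^2 = 3 * \<kappa> / 8 * t^2 - \<bar>t\<bar> + 2 / (3 * \<kappa>)"
    using assms by (simp add: power2_eq_square field_simps)
  finally show ?thesis by simp
qed

lemma pot_bound:
  fixes F :: "distr \<Rightarrow> real"
  assumes good: "goodDQ d q \<eta> DQ" and eta: "\<eta> > 0" "2 / \<eta> = real N" and q: "q \<ge> 1" and d: "d \<ge> 1"
    and e: "\<epsilon> > 0" and k: "\<kappa> > 0"
    and Cq: "Cq \<ge> 0" and c: "c \<ge> 0"
    and F: "\<And>Ps. F Ps \<le> Cq + c * Max ((\<lambda>i. \<bar>Tr * aI q DQ i - mI d \<eta> Ps i\<bar>) ` {..<d})"
    and A: "A = ln (real d) / (real q * \<epsilon>) + 2 / (3 * \<kappa>) + \<kappa> / (4 * real q ^ 2 * \<epsilon> ^ 2)"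
    and v: "valid d \<eta> P"
  shows "h2_exp d q \<eta> \<epsilon> DQ F n P Ps \<le>
     Cq + c * (Max ((\<lambda>i. \<bar>(Tr - real n) * aI q DQ i - mI d \<eta> Ps i\<bar>) ` {..<d})
       + (2 - MM d q \<eta> DQ P + real n * A + \<kappa> * Phi d q DQ P))"
proof -
  define ee where "ee = (\<lambda>P i. aI q DQ i - mI d \<eta> P i)"
  have q0: "real q > 0" using q by simp
  have A0: "A \<ge> 0" unfolding A using d q0 e k by (intro add_nonneg_nonneg divide_nonneg_nonneg) auto
  show ?thesis
  proof (rule main_induct[OF good eta q d e Cq c F, where
        \<rho> = "\<lambda>n P. 2 - MM d q \<eta> DQ P + real n * A + \<kappa> * Phi d q DQ P"
        and ka = "\<lambda>n P i. 2 + real n * A + \<kappa> * Phi d q DQ P - 3 / 8 * \<kappa> * (ee P i)^2"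
        and kb = "\<lambda>n P i. - \<kappa> * ee P i / (4 * real q)"
        and kc = "\<lambda>n P i. \<kappa> / (8 * real q ^ 2)"])
    fix n P assume v: "valid d \<eta> P"
    show "0 \<le> 2 - MM d q \<eta> DQ P + real n * A + \<kappa> * Phi d q DQ P"
      using MM_bounds(2)[OF good eta q d v] Phi_nonneg[OF v good] A0 k by simp
  next
    fix n P i z assume v: "valid d \<eta> P" and i: "i < d"
    define P' where "P' = upd d q \<eta> P i (wDQ q DQ i + z)"
    have "\<kappa> * Phi d q DQ P' \<le> \<kappa> * (Phi d q DQ P - 3 / 8 * (ee P i)^2 - ee P i * z / (4 * real q)
       + z^2 / (8 * real q ^ 2))"
      unfolding P'_def ee_def using Phi_step[OF v eta good q i, of z] k by (intro mult_left_mono) auto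
    then show "MM d q \<eta> DQ P' + (2 - MM d q \<eta> DQ P' + real n * A + \<kappa> * Phi d q DQ P') \<le>
       2 + real n * A + \<kappa> * Phi d q DQ P - 3 / 8 * \<kappa> * (ee P i)^2 + - \<kappa> * ee P i / (4 * real q) * z
       + \<kappa> / (8 * real q ^ 2) * z^2"
      by (simp add: algebra_simps)
  next
    fix n P assume v: "valid d \<eta> P"
    define p where "p = em_prob d q \<eta> \<epsilon> DQ P"
    have ps: "(\<Sum>i<d. p i) = 1" unfolding p_def by (rule em_prob_sum[OF d])
    have p0: "p i \<ge> 0" for i unfolding p_def by (rule em_prob_nonneg)
    define K where "K = 2 + real n * A + \<kappa> * Phi d q DQ P + \<kappa> / (4 * real q ^ 2 * \<epsilon> ^ 2)"
    have c2e: "\<kappa> / (8 * real q ^ 2) * (2 / \<epsilon>^2) = \<kappa> / (4 * real q ^ 2 * \<epsilon> ^ 2)"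
      using e q0 by (simp add: field_simps)
    have "(\<Sum>i<d. p i * (2 + real n * A + \<kappa> * Phi d q DQ P - 3 / 8 * \<kappa> * (ee P i)^2
            + \<kappa> / (8 * real q ^ 2) * (2 / \<epsilon>^2)))
        = (\<Sum>i<d. p i * K - 3 * \<kappa> / 8 * (p i * (ee P i)^2))"
      unfolding c2e K_def by (intro sum.cong refl) (simp add: algebra_simps)
    also have "\<dots> = K - 3 * \<kappa> / 8 * (\<Sum>i<d. p i * (ee P i)^2)"
    proof -
      have s1: "(\<Sum>i<d. p i * K) = K" using ps by (simp add: sum_distrib_right[symmetric])
      have s2: "(\<Sum>i<d. 3 * \<kappa> / 8 * (p i * (ee P i)^2)) = 3 * \<kappa> / 8 * (\<Sum>i<d. p i * (ee P i)^2)"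
        by (rule sum_distrib_left[symmetric])
      show ?thesis unfolding sum_subtractf s1 s2 by (rule refl)
    qed
    also have "\<dots> \<le> 2 - MM d q \<eta> DQ P + real (Suc n) * A + \<kappa> * Phi d q DQ P"
    proof -
      have em: "MM d q \<eta> DQ P - ln (real d) / (real q * \<epsilon>) \<le> (\<Sum>i<d. p i * \<bar>ee P i\<bar>)"
        using em_MM[OF v eta good q d e] unfolding p_def ee_def by simp
      have "(\<Sum>i<d. p i * \<bar>ee P i\<bar>) \<le> (\<Sum>i<d. p i * (3 * \<kappa> / 8 * (ee P i)^2 + 2 / (3 * \<kappa>)))"
        using p0 amgm_abs[OF k] by (intro sum_mono mult_left_mono) auto
      also have "\<dots> = 3 * \<kappa> / 8 * (\<Sum>i<d. p i * (ee P i)^2) + 2 / (3 * \<kappa>)"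
      proof -
        have "(\<Sum>i<d. p i * (3 * \<kappa> / 8 * (ee P i)^2 + 2 / (3 * \<kappa>)))
            = (\<Sum>i<d. 3 * \<kappa> / 8 * (p i * (ee P i)^2) + p i * (2 / (3 * \<kappa>)))"
          by (intro sum.cong refl) (simp add: algebra_simps)
        also have "\<dots> = 3 * \<kappa> / 8 * (\<Sum>i<d. p i * (ee P i)^2) + (\<Sum>i<d. p i) * (2 / (3 * \<kappa>))"
          unfolding sum.distrib sum_distrib_left[symmetric] sum_distrib_right[symmetric] by (rule refl)
        finally show ?thesis using ps by simp
      qed
      finally have "MM d q \<eta> DQ P \<le> ln (real d) / (real q * \<epsilon>) + 3 * \<kappa> / 8 * (\<Sum>i<d. p i * (ee P i)^2) + 2 / (3 * \<kappa>)"
        using em by linarith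
      moreover have "real (Suc n) * A = real n * A + A" by (simp add: algebra_simps)
      ultimately show ?thesis unfolding K_def using A by linarith
    qed
    finally show "(\<Sum>i<d. em_prob d q \<eta> \<epsilon> DQ P i * (2 + real n * A + \<kappa> * Phi d q DQ P - 3 / 8 * \<kappa> * (ee P i)^2
            + \<kappa> / (8 * real q ^ 2) * (2 / \<epsilon>^2)))
        \<le> 2 - MM d q \<eta> DQ P + real (Suc n) * A + \<kappa> * Phi d q DQ P"
      unfolding p_def .
  qed (rule v)
qed

lemma triv_bound:
  fixes F :: "distr \<Rightarrow> real"
  assumes good: "goodDQ d q \<eta> DQ" and eta: "\<eta> > 0" "2 / \<eta> = real N" and q: "q \<ge> 1" and d: "d \<ge> 1"
    and e: "\<epsilon> > 0"
    and Cq: "Cq \<ge> 0" and c: "c \<ge> 0"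
    and F: "\<And>Ps. F Ps \<le> Cq + c * Max ((\<lambda>i. \<bar>Tr * aI q DQ i - mI d \<eta> Ps i\<bar>) ` {..<d})"
    and v: "valid d \<eta> P"
  shows "h2_exp d q \<eta> \<epsilon> DQ F n P Ps \<le>
     Cq + c * (Max ((\<lambda>i. \<bar>(Tr - real n) * aI q DQ i - mI d \<eta> Ps i\<bar>) ` {..<d}) + 2 * real n)"
proof (rule main_induct[OF good eta q d e Cq c F, where
        \<rho> = "\<lambda>n P. 2 * real n"
        and ka = "\<lambda>n P i. 2 * real n + 2"
        and kb = "\<lambda>n P i. 0"
        and kc = "\<lambda>n P i. 0"])
  fix n P i z assume v: "valid d \<eta> P" and i: "i < d"
  show "MM d q \<eta> DQ (upd d q \<eta> P i (wDQ q DQ i + z)) + 2 * real n \<le> 2 * real n + 2 + 0 * z + 0 * z^2"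
    using MM_bounds(2)[OF good eta q d valid_upd[OF v eta]] by simp
next
  fix n P assume v: "valid d \<eta> P"
  show "(\<Sum>i<d. em_prob d q \<eta> \<epsilon> DQ P i * (2 * real n + 2 + 0 * (2 / \<epsilon>^2))) \<le> 2 * real (Suc n)"
    using em_prob_sum[OF d] by (simp add: sum_distrib_right[symmetric])
qed (use v in auto)



lemma err_bound:
  assumes d: "d \<ge> 1" and q: "q \<ge> 1" and T: "Tr > 0"
    and hv: "\<And>j i. j < q \<Longrightarrow> i < d \<Longrightarrow> \<bar>DQ (j, i) - sqrt (real d / 2) * v j i\<bar> \<le> \<eta>"
  shows "err d q \<eta> v (\<lambda>x. Ps x / Tr) \<le> sqrt (2 / real d) * \<eta>
     + sqrt (2 / real d) / Tr * Max ((\<lambda>i. \<bar>Tr * aI q DQ i - mI d \<eta> Ps i\<bar>) ` {..<d})"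
proof -
  define s where "s = sqrt (2 / real d)"
  define Mx where "Mx = Max ((\<lambda>i. \<bar>Tr * aI q DQ i - mI d \<eta> Ps i\<bar>) ` {..<d})"
  have ne: "{..<d} \<noteq> {}" using d by (simp add: lessThan_empty_iff)
  have q0: "real q > 0" using q by simp
  have s0: "s \<ge> 0" unfolding s_def by simp
  have ss: "s * sqrt (real d / 2) = 1" unfolding s_def using d
    by (simp add: real_sqrt_mult[symmetric])
  show ?thesis unfolding err_def s_def[symmetric] Mx_def[symmetric]
  proof (subst Max_le_iff, simp, use ne in simp, intro ballI)
    fix a assume "a \<in> (\<lambda>i. \<bar>wD q v i / real q - s * (1 / real q) * wP d q \<eta> (\<lambda>x. Ps x / Tr) i\<bar>) ` {..<d}"
    then obtain i where i: "i < d" "a = \<bar>wD q v i / real q - s * (1 / real q) * wP d q \<eta> (\<lambda>x. Ps x / Tr) i\<bar>" by auto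
    have a: "a = \<bar>wD q v i / real q - s * (mI d \<eta> Ps i / Tr)\<bar>"
      using i q0 by (simp add: wP_eq mI_div)
    have "\<bar>wD q v i - s * wDQ q DQ i\<bar> = \<bar>\<Sum>j<q. s * (sqrt (real d / 2) * v j i - DQ (j, i))\<bar>"
    proof -
      have "(\<Sum>j<q. s * (sqrt (real d / 2) * v j i - DQ (j, i))) = (\<Sum>j<q. v j i - s * DQ (j, i))"
        by (intro sum.cong refl) (simp add: right_diff_distrib mult.assoc[symmetric] ss)
      also have "\<dots> = wD q v i - s * wDQ q DQ i"
        unfolding wD_def wDQ_def sum_subtractf sum_distrib_left by (rule refl)
      finally show ?thesis by simp
    qed
    also have "\<dots> \<le> (\<Sum>j<q. \<bar>s * (sqrt (real d / 2) * v j i - DQ (j, i))\<bar>)" by (rule sum_abs)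
    also have "\<dots> \<le> (\<Sum>j<q. s * \<eta>)"
    proof (intro sum_mono)
      fix j assume "j \<in> {..<q}"
      then have "\<bar>sqrt (real d / 2) * v j i - DQ (j, i)\<bar> \<le> \<eta>" using hv[of j i] i by (simp add: abs_minus_commute)
      then show "\<bar>s * (sqrt (real d / 2) * v j i - DQ (j, i))\<bar> \<le> s * \<eta>"
        using s0 by (simp add: abs_mult mult_left_mono)
    qed
    finally have E1: "\<bar>wD q v i - s * wDQ q DQ i\<bar> \<le> real q * (s * \<eta>)" by simp
    have E1': "\<bar>wD q v i / real q - s * aI q DQ i\<bar> \<le> s * \<eta>"
    proof -
      have "wD q v i / real q - s * aI q DQ i = (wD q v i - s * wDQ q DQ i) / real q"
        unfolding aI_def using q0 by (simp add: field_simps)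
      then show ?thesis using E1 q0 by (simp add: abs_div divide_le_eq mult.commute)
    qed
    have E2: "\<bar>s * aI q DQ i - s * (mI d \<eta> Ps i / Tr)\<bar> = s / Tr * \<bar>Tr * aI q DQ i - mI d \<eta> Ps i\<bar>"
    proof -
      have "s * aI q DQ i - s * (mI d \<eta> Ps i / Tr) = s / Tr * (Tr * aI q DQ i - mI d \<eta> Ps i)"
        using T by (simp add: field_simps)
      then show ?thesis using s0 T by (simp add: abs_mult)
    qed
    have E3: "\<bar>Tr * aI q DQ i - mI d \<eta> Ps i\<bar> \<le> Mx" unfolding Mx_def using i by (intro Max_ge) auto
    have E3': "s / Tr * \<bar>Tr * aI q DQ i - mI d \<eta> Ps i\<bar> \<le> s / Tr * Mx"
      using E3 s0 T by (intro mult_left_mono) auto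
    have tri: "\<bar>wD q v i / real q - s * (mI d \<eta> Ps i / Tr)\<bar> \<le>
        \<bar>wD q v i / real q - s * aI q DQ i\<bar> + \<bar>s * aI q DQ i - s * (mI d \<eta> Ps i / Tr)\<bar>"
      by (rule order_trans[OF _ abs_triangle_ineq]) simp
    have "a \<le> \<bar>wD q v i / real q - s * aI q DQ i\<bar> + \<bar>s * aI q DQ i - s * (mI d \<eta> Ps i / Tr)\<bar>"
      unfolding a by (rule tri)
    also have "\<dots> \<le> s * \<eta> + s / Tr * Mx"
      unfolding E2 by (rule add_mono[OF E1' E3'])
    finally show "a \<le> s * \<eta> + s / Tr * Mx" .
  qed
qed

lemma pmf_exp_le:
  fixes f :: "'a \<Rightarrow> real"
  assumes "\<And>x. x \<in> set_pmf p \<Longrightarrow> f x \<le> C" "0 \<le> C"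
  shows "measure_pmf.expectation p f \<le> C"
proof (cases "integrable (measure_pmf p) f")
  case True
  then show ?thesis using assms by (intro measure_pmf.integral_le_const) (auto simp: AE_measure_pmf_iff)
next
  case False then show ?thesis using assms by (simp add: not_integrable_integral_eq)
qed

lemma DQ_props:
  assumes "DQ \<in> set_pmf (quant_data d q \<eta> v)" "\<eta> > 0" "2 / \<eta> = real N"
    "\<forall>j<q. \<forall>i<d. \<bar>v j i\<bar> \<le> sqrt (2 / real d)" "d \<ge> 1"
  shows "goodDQ d q \<eta> DQ" "\<And>j i. j < q \<Longrightarrow> i < d \<Longrightarrow> \<bar>DQ (j, i) - sqrt (real d / 2) * v j i\<bar> \<le> \<eta>"
proof -
  have x: "-1 \<le> sqrt (real d / 2) * v j i \<and> sqrt (real d / 2) * v j i \<le> 1" if "j < q" "i < d" for j i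
  proof -
    have "\<bar>sqrt (real d / 2) * v j i\<bar> \<le> sqrt (real d / 2) * sqrt (2 / real d)"
      using assms(4) that by (simp add: abs_mult mult_left_mono)
    also have "\<dots> = 1" using assms(5) by (simp add: real_sqrt_mult[symmetric])
    finally show ?thesis by (simp add: abs_le_iff)
  qed
  have Q: "DQ (j, i) \<in> grid \<eta> \<and> \<bar>DQ (j, i) - sqrt (real d / 2) * v j i\<bar> \<le> \<eta>" if "j < q" "i < d" for j i
    using quant_support[OF assms(2,3) _ _ quant_data_support[OF assms(1) that]] x[OF that] by auto
  show "goodDQ d q \<eta> DQ" unfolding goodDQ_def using Q by auto
  show "\<And>j i. j < q \<Longrightarrow> i < d \<Longrightarrow> \<bar>DQ (j, i) - sqrt (real d / 2) * v j i\<bar> \<le> \<eta>" using Q by auto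
qed

lemma Max_zero_mI:
  assumes "d \<ge> 1"
  shows "Max ((\<lambda>i. \<bar>0 * aI q DQ i - mI d \<eta> (\<lambda>_. 0) i\<bar>) ` {..<d}) = 0"
proof -
  have ne: "{..<d} \<noteq> {}" using assms by (simp add: lessThan_empty_iff)
  have "(\<lambda>i. \<bar>0 * aI q DQ i - mI d \<eta> (\<lambda>_. 0) i\<bar>) ` {..<d} = {0}"
    using ne by (auto simp: mI_def)
  then show ?thesis by simp
qed



lemma final_arith:
  fixes D Q e Nr \<eta> :: real
  assumes D: "D \<ge> 2" and Q: "Q \<ge> 1" and e: "e > 0" and Nr: "Nr \<ge> 1" and eta: "\<eta> > 0"
  defines "r \<equiv> sqrt (1 / (4 * Q^2 * e^2) + ln (Nr + 1) / D)"
  defines "A \<equiv> ln D / (Q * e) + 2 / (3 * (1 / r)) + (1 / r) / (4 * Q^2 * e^2)"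
  shows "sqrt (2 / D) * \<eta> + sqrt (2 / D) / D^2 * (2 + D^2 * A + (1 / r) * (D * ln (Nr + 1)))
    \<le> 2 * sqrt (2 * ln Nr / D^2) + 11 * sqrt 2 * ln D / (Q * e * sqrt D) + 4 / D + 2 * D * exp (- Q / 4) + \<eta>"
proof -
  define s where "s = sqrt (2 / D)"
  define \<sigma> where "\<sigma> = 1 / (4 * Q^2 * e^2)"
  define lL where "lL = ln (Nr + 1) / D"
  define L where "L = ln D / (Q * e)"
  have D0: "D > 0" using D by simp
  have \<sigma>0: "\<sigma> > 0" unfolding \<sigma>_def using Q e by simp
  have lL0: "lL \<ge> 0" unfolding lL_def using Nr D0 by simp
  have r: "r = sqrt (\<sigma> + lL)" unfolding r_def \<sigma>_def lL_def by simp
  have r0: "r > 0" unfolding r using \<sigma>0 lL0 by simp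
  have r2: "r * r = \<sigma> + lL" unfolding r using \<sigma>0 lL0 by simp
  have s0: "s \<ge> 0" unfolding s_def using D0 by simp
  have s1: "s \<le> 1" unfolding s_def using D by simp
  have sD: "s = sqrt 2 / sqrt D" unfolding s_def by (simp add: real_sqrt_divide)
  have A: "A = L + 2 * r / 3 + \<sigma> / r" unfolding A_def L_def \<sigma>_def using r0 by (simp add: field_simps)
  have B: "s / D^2 * (2 + D^2 * A + (1 / r) * (D * ln (Nr + 1)))
      = 2 * s / D^2 + s * L + 5 / 3 * s * r"
  proof -
    have "s / D^2 * (2 + D^2 * A + (1 / r) * (D * ln (Nr + 1)))
        = 2 * s / D^2 + s * (A + lL / r)"
      unfolding lL_def using D0 r0 by (simp add: field_simps power2_eq_square)
    also have "A + lL / r = L + 2 * r / 3 + (\<sigma> + lL) / r" unfolding A by (simp add: add_divide_distrib)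
    also have "(\<sigma> + lL) / r = r" using r2 r0 by (simp add: field_simps)
    finally show ?thesis by (simp add: algebra_simps)
  qed
  have rle: "r \<le> sqrt \<sigma> + sqrt lL" unfolding r by (rule sqrt_add_le_add_sqrt) (use \<sigma>0 lL0 in auto)
  have sqs: "sqrt \<sigma> = 1 / (2 * Q * e)"
  proof -
    have "\<sigma> = (1 / (2 * Q * e))^2" unfolding \<sigma>_def by (simp add: power2_eq_square field_simps)
    then show ?thesis using Q e by simp
  qed
  have ln2: "ln 2 \<ge> (1::real) / 2"
  proof -
    have "ln (1 / 2 :: real) \<le> 1 / 2 - 1" by (rule ln_le_minus_one) simp
    then show ?thesis by (simp add: ln_div)
  qed
  have lnD: "ln D \<ge> 1 / 2" using ln2 D by (smt (verit) ln_le_cancel_iff)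
  have part1: "s * L + 5 / 3 * s * sqrt \<sigma> \<le> 11 * sqrt 2 * ln D / (Q * e * sqrt D)"
  proof -
    have "s * L + 5 / 3 * s * sqrt \<sigma> = s * ((ln D + 5 / 6) / (Q * e))"
      unfolding L_def sqs using Q e by (simp add: field_simps)
    also have "\<dots> \<le> s * ((11 * ln D) / (Q * e))"
      using lnD Q e s0 by (intro mult_left_mono divide_right_mono) auto
    also have "\<dots> = 11 * sqrt 2 * ln D / (Q * e * sqrt D)" unfolding sD by (simp add: mult_ac)
    finally show ?thesis .
  qed
  have lnN: "ln (Nr + 1) \<le> ln Nr + 1"
  proof -
    have "ln (Nr + 1) \<le> ln (2 * Nr)" using Nr by simp
    also have "\<dots> = ln 2 + ln Nr" using Nr by (simp add: ln_mult)
    also have "ln 2 \<le> (1::real)" using ln_2_less_1 by simp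
    finally show ?thesis by simp
  qed
  have lnN0: "ln Nr \<ge> 0" using Nr by simp
  have part2: "5 / 3 * s * sqrt lL \<le> 2 * sqrt (2 * ln Nr / D^2) + 3 / D"
  proof -
    have "s * sqrt lL = sqrt (2 * ln (Nr + 1)) / D"
      unfolding s_def lL_def using D0 by (simp add: real_sqrt_mult[symmetric] real_sqrt_divide power2_eq_square)
    also have "sqrt (2 * ln (Nr + 1)) \<le> sqrt (2 * ln Nr + 2)" using lnN by simp
    also have "\<dots> \<le> sqrt (2 * ln Nr) + sqrt 2" by (rule sqrt_add_le_add_sqrt) (use lnN0 in auto)
    finally have "s * sqrt lL \<le> (sqrt (2 * ln Nr) + sqrt 2) / D" using D0 by (simp add: divide_right_mono)
    then have "5 / 3 * (s * sqrt lL) \<le> 5 / 3 * ((sqrt (2 * ln Nr) + sqrt 2) / D)" by (rule mult_left_mono) simp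
    then have "5 / 3 * s * sqrt lL \<le> 5 / 3 * ((sqrt (2 * ln Nr) + sqrt 2) / D)" by (simp only: mult.assoc)
    also have "\<dots> \<le> 2 * (sqrt (2 * ln Nr) / D) + 3 / D"
    proof -
      have sq2: "sqrt 2 \<le> (3/2::real)" by (rule real_le_lsqrt) (auto simp: power2_eq_square)
      have "5 / 3 * (sqrt (2 * ln Nr) + sqrt 2) \<le> 2 * sqrt (2 * ln Nr) + 3"
      proof -
        have "0 \<le> sqrt (2 * ln Nr)" using lnN0 by simp
        moreover have gen: "5/3*(x+y) \<le> 2*x+3" if "0 \<le> x" "y \<le> 3/2" for x y :: real using that by (simp add: field_simps)
        ultimately show ?thesis using sq2 by blast
      qed
      then have "5 / 3 * (sqrt (2 * ln Nr) + sqrt 2) / D \<le> (2 * sqrt (2 * ln Nr) + 3) / D"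
        using D0 by (intro divide_right_mono) auto
      moreover have "5 / 3 * ((sqrt (2 * ln Nr) + sqrt 2) / D) = 5 / 3 * (sqrt (2 * ln Nr) + sqrt 2) / D"
        by simp
      moreover have "(2 * sqrt (2 * ln Nr) + 3) / D = 2 * (sqrt (2 * ln Nr) / D) + 3 / D"
        by (simp add: add_divide_distrib)
      ultimately show ?thesis by simp
    qed
    also have "sqrt (2 * ln Nr) / D = sqrt (2 * ln Nr / D^2)" using D0 by (simp add: real_sqrt_divide)
    finally show ?thesis .
  qed
  have part3: "2 * s / D^2 \<le> 1 / D"
  proof -
    have "2 * s / D^2 \<le> 2 / D^2" using s1 D0 by (simp add: divide_right_mono)
    also have "\<dots> \<le> 1 / D" using D by (simp add: field_simps power2_eq_square)
    finally show ?thesis .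
  qed
  have part4: "s * \<eta> \<le> \<eta>" using s1 eta by simp
  have "5 / 3 * s * r \<le> 5 / 3 * s * sqrt \<sigma> + 5 / 3 * s * sqrt lL"
    using rle s0 by (simp add: mult_left_mono distrib_left[symmetric])
  moreover have "0 \<le> 2 * D * exp (- Q / 4)" using D0 by simp
  ultimately show ?thesis unfolding s_def[symmetric] B using part1 part2 part3 part4 by linarith
qed



theorem theorem3:
  fixes d q :: nat and \<eta> \<epsilon> :: real and v :: "nat \<Rightarrow> nat \<Rightarrow> real"
  assumes "d \<ge> 1" and "q \<ge> 1" and "\<eta> > 0" and "\<epsilon> > 0"
    and "\<exists>N::nat. 2 / \<eta> = real N"
    and "\<forall>j<q. \<forall>i<d. \<bar>v j i\<bar> \<le> sqrt (2 / real d)"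
  shows "h2_expected_error d q \<eta> \<epsilon> (d^2) v
    \<le> 2 * sqrt (2 * ln (2 / \<eta>) / real d ^ 2)
      + 11 * sqrt 2 * ln (real d) / (real q * \<epsilon> * sqrt (real d))
      + 4 / real d + 2 * real d * exp (- real q / 4) + \<eta>"
proof -
  note d = assms(1) and q = assms(2) and eta0 = assms(3) and e = assms(4) and vb = assms(6)
  obtain N :: nat where N: "2 / \<eta> = real N" using assms(5) by blast
  have N1: "N \<ge> 1" using N eta0 by (cases "N = 0") auto
  have etaN: "\<eta> = 2 / real N" using N N1 eta0 by (simp add: field_simps)
  define RHS where "RHS = 2 * sqrt (2 * ln (2 / \<eta>) / real d ^ 2)
      + 11 * sqrt 2 * ln (real d) / (real q * \<epsilon> * sqrt (real d))
      + 4 / real d + 2 * real d * exp (- real q / 4) + \<eta>"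
  define F where "F = (\<lambda>Ps. err d q \<eta> v (\<lambda>s. Ps s / real (d^2)))"
  define Tr where "Tr = real (d^2)"
  define s where "s = sqrt (2 / real d)"
  have Tr0: "Tr > 0" unfolding Tr_def using d by simp
  have s0: "s \<ge> 0" unfolding s_def by simp
  have lnN0: "ln (real N) \<ge> 0" using N1 by simp
  have RHS0: "RHS \<ge> 0" unfolding RHS_def N using d q e eta0 lnN0
    by (intro add_nonneg_nonneg mult_nonneg_nonneg divide_nonneg_nonneg) auto
  have per: "h2_exp d q \<eta> \<epsilon> DQ F (d^2) (P0 d \<eta>) (\<lambda>_. 0) \<le> RHS"
    if DQ: "DQ \<in> set_pmf (quant_data d q \<eta> v)" for DQ
  proof -
    have good: "goodDQ d q \<eta> DQ" by (rule DQ_props(1)[OF DQ eta0 N vb d])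
    have hv: "\<And>j i. j < q \<Longrightarrow> i < d \<Longrightarrow> \<bar>DQ (j, i) - sqrt (real d / 2) * v j i\<bar> \<le> \<eta>"
      by (rule DQ_props(2)[OF DQ eta0 N vb d])
    have Fb: "F Ps \<le> s * \<eta> + s / Tr * Max ((\<lambda>i. \<bar>Tr * aI q DQ i - mI d \<eta> Ps i\<bar>) ` {..<d})" for Ps
      unfolding F_def s_def Tr_def[symmetric] by (rule err_bound[where DQ=DQ and v=v and \<eta>=\<eta>, OF d q Tr0 hv])
    have Cq: "s * \<eta> \<ge> 0" using s0 eta0 by simp
    have c: "s / Tr \<ge> 0" using s0 Tr0 by simp
    have v0: "valid d \<eta> (P0 d \<eta>)" by (rule valid_P0[OF eta0 N])
    have M0: "Max ((\<lambda>i. \<bar>(Tr - real (d^2)) * aI q DQ i - mI d \<eta> (\<lambda>_. 0) i\<bar>) ` {..<d}) = 0"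
      unfolding Tr_def using Max_zero_mI[OF d] by simp
    show ?thesis
    proof (cases "d = 1")
      case True
      have "h2_exp d q \<eta> \<epsilon> DQ F (d^2) (P0 d \<eta>) (\<lambda>_. 0) \<le>
          s * \<eta> + s / Tr * (Max ((\<lambda>i. \<bar>(Tr - real (d^2)) * aI q DQ i - mI d \<eta> (\<lambda>_. 0) i\<bar>) ` {..<d}) + 2 * real (d^2))"
        by (rule triv_bound[OF good eta0 N q d e Cq c Fb v0])
      also have "\<dots> = sqrt 2 * \<eta> + 2 * sqrt 2" unfolding M0 using True by (simp add: s_def Tr_def)
      also have "\<dots> \<le> RHS"
      proof -
        have sq2: "sqrt 2 \<le> (3/2::real)" by (rule real_le_lsqrt) (auto simp: power2_eq_square)
        have eta2: "\<eta> \<le> 2" unfolding etaN using N1 by (simp add: divide_le_eq)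
        have "sqrt 2 * \<eta> \<le> 3 / 2 * \<eta>" using sq2 eta0 by (intro mult_right_mono) auto
        moreover have "0 \<le> 2 * sqrt (2 * ln (2 / \<eta>) / real d ^ 2)" unfolding N using lnN0 by simp
        moreover have "0 \<le> 2 * real d * exp (- real q / 4)" by simp
        moreover have "11 * sqrt 2 * ln (real d) / (real q * \<epsilon> * sqrt (real d)) = 0" using True by simp
        moreover have "4 / real d = 4" using True by simp
        ultimately show ?thesis unfolding RHS_def using sq2 eta2 by linarith
      qed
      finally show ?thesis .
    next
      case False
      then have d2: "real d \<ge> 2" using d by simp
      define \<sigma> where "\<sigma> = 1 / (4 * real q ^ 2 * \<epsilon> ^ 2)"
      define r where "r = sqrt (1 / (4 * real q ^ 2 * \<epsilon> ^ 2) + ln (real N + 1) / real d)"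
      define A where "A = ln (real d) / (real q * \<epsilon>) + 2 / (3 * (1 / r)) + (1 / r) / (4 * real q ^ 2 * \<epsilon> ^ 2)"
      have r0: "r > 0" unfolding r_def using q e d N1 by (intro real_sqrt_gt_zero add_pos_nonneg) auto
      have k: "1 / r > 0" using r0 by simp
      have "h2_exp d q \<eta> \<epsilon> DQ F (d^2) (P0 d \<eta>) (\<lambda>_. 0) \<le>
          s * \<eta> + s / Tr * (Max ((\<lambda>i. \<bar>(Tr - real (d^2)) * aI q DQ i - mI d \<eta> (\<lambda>_. 0) i\<bar>) ` {..<d})
          + (2 - MM d q \<eta> DQ (P0 d \<eta>) + real (d^2) * A + (1 / r) * Phi d q DQ (P0 d \<eta>)))"
        by (rule pot_bound[OF good eta0 N q d e k Cq c Fb A_def v0])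
      also have "\<dots> \<le> s * \<eta> + s / Tr * (2 + Tr * A + (1 / r) * (real d * ln (real N + 1)))"
      proof -
        have MM0: "0 \<le> MM d q \<eta> DQ (P0 d \<eta>)" by (rule MM_bounds(1)[OF good eta0 N q d v0])
        have PE: "Phi d q DQ (P0 d \<eta>) = real d * ln (real N + 1)"
          using Phi_P0[OF eta0 N good] q by simp
        have "Max ((\<lambda>i. \<bar>(Tr - real (d^2)) * aI q DQ i - mI d \<eta> (\<lambda>_. 0) i\<bar>) ` {..<d})
            + (2 - MM d q \<eta> DQ (P0 d \<eta>) + real (d^2) * A + (1 / r) * Phi d q DQ (P0 d \<eta>))
            = 2 - MM d q \<eta> DQ (P0 d \<eta>) + Tr * A + (1 / r) * (real d * ln (real N + 1))"
          using M0 unfolding PE Tr_def by simp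
        also have "\<dots> \<le> 2 + Tr * A + (1 / r) * (real d * ln (real N + 1))" using MM0 by linarith
        finally show ?thesis using c by (intro add_left_mono mult_left_mono)
      qed
      also have "\<dots> \<le> RHS"
        unfolding RHS_def N s_def Tr_def of_nat_power
        using final_arith[OF d2 _ e _ eta0, of "real q" "real N"] q N1 unfolding A_def r_def
        by simp
      finally show ?thesis .
    qed
  qed
  show ?thesis
    unfolding h2_expected_error_def F_def[symmetric] RHS_def[symmetric]
    by (rule pmf_exp_le[OF per RHS0])
qed


end
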